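(* Let $q$ be a power of an odd prime, $a\in\mathbb{F}_q^*$ with $a\neq\pm1$, $b\in\mathbb{F}_q$ a nonsquare, $\beta\in\mathbb{F}_{q^2}$ with $\beta^2=b$, and $f(X)=X^{q+1}+aX^2$ on $\mathbb{F}_{q^2}$. For $\gamma\in\mathbb{F}_{q^2}$ let $f^{-1}(\gamma)=\{X\in\mathbb{F}_{q^2}: f(X)=\gamma\}$. Let $\alpha\in\mathbb{F}_q^*$. Then: (1) $\#f^{-1}(\alpha)=0$ if $\chi_2(\alpha(a-1))=1$ and $\chi_2(\alpha(a+1))=-1$; $\#f^{-1}(\alpha)=4$ if $\chi_2(\alpha(a-1))=-1$ and $\chi_2(\alpha(a+1))=1$; and $\#f^{-1}(\alpha)=2$ otherwise. (2) If $q\equiv3\pmod4$, then $\#f^{-1}(\alpha\beta)=0$ if $\chi_2(1-a^2)=1$ and $\#f^{-1}(\alpha\beta)=2$ if $\chi_2(1-a^2)=-1$. (3) If $q\equiv1\pmod4$, then $\#f^{-1}(\alpha\beta)=4$ if $\chi_2(1-a^2)=-1$ and $\chi_2(2\gamma_a\alpha a)=1$, and $\#f^{-1}(\alpha\beta)=0$ otherwise, where (when $\chi_2(1-a^2)=-1$) $\gamma_a\in\mathbb{F}_q$ satisfies $\gamma_a^2=-\frac{(a-1)b}{a+1}$.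
   Context: $\chi_2$ is the quadratic character of $\mathbb{F}_q$: $\chi_2(\alpha)=1$ if $\alpha$ is a nonzero square, $-1$ if $\alpha$ is a nonsquare, $0$ if $\alpha=0$. *)

theory Defs
  imports "HOL-Computational_Algebra.Primes"
begin

text \<open>The field F_{q^2} is modelled as a finite field type of cardinality q^2;
  its subfield F_q is the fixed field of the Frobenius X \<mapsto> X^q.\<close>

definition Fq :: "nat \<Rightarrow> 'a::field set" where
  "Fq q = {x. x ^ q = x}"

definition chi2 :: "nat \<Rightarrow> 'a::field \<Rightarrow> int" where
  "chi2 q x = (if x = 0 then 0 else if (\<exists>y\<in>Fq q. y ^ 2 = x) then 1 else -1)"

definition fmap :: "nat \<Rightarrow> 'a::field \<Rightarrow> 'a \<Rightarrow> 'a" where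
  "fmap q a X = X ^ (q + 1) + a * X ^ 2"

end

theory Submission
  imports Defs "HOL-Computational_Algebra.Polynomial"
begin

lemma field_pow_card_same:
  fixes x :: "'a :: {field,finite}"
  shows   "x ^ card (UNIV :: 'a set) = x"
proof (cases "x = 0")
  case False
  have "x * (\<Prod>y\<in>UNIV-{0}. x * y) = x * x ^ (card (UNIV :: 'a set) - 1) * \<Prod>(UNIV-{0})"
    by (simp add: prod.distrib mult_ac)
  also have "x * x ^ (card (UNIV :: 'a set) - 1) = x ^ Suc (card (UNIV :: 'a set) - 1)"
    by (subst power_Suc) auto
  also have "Suc (card (UNIV :: 'a set) - 1) = card (UNIV :: 'a set)"
    using finite_UNIV_card_ge_0[where ?'a = 'a] by simp
  also have "(\<Prod>y\<in>UNIV-{0}. x * y) = (\<Prod>y\<in>UNIV-{0}. y)"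
    by (rule prod.reindex_bij_witness[of _ "\<lambda>y. y / x" "\<lambda>y. x * y"]) (use False in auto)
  finally show ?thesis
    by simp
qed (use finite_UNIV_card_ge_0[where ?'a = 'a] in auto)

lemma of_nat_card_zero: "of_nat (card (UNIV :: 'a::{field,finite} set)) = (0::'a)"
proof -
  have "(\<Sum>y\<in>(UNIV::'a set). y + 1) = (\<Sum>y\<in>UNIV. y)"
    by (rule sum.reindex_bij_witness[of _ "\<lambda>y. y - 1" "\<lambda>y. y + 1"]) auto
  then show ?thesis by (simp add: sum.distrib)
qed

locale FF =
  fixes p k q :: nat and b \<beta> :: "'a::{field,finite}"
  assumes p: "prime p" "odd p" and k: "k \<ge> 1" and qdef: "q = p ^ k"
    and card: "card (UNIV::'a set) = q ^ 2"
    and bF: "b \<in> Fq q" and bchi: "chi2 q b = -1" and beta: "\<beta> ^ 2 = b"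
begin

lemma CHAR: "CHAR('a) = p"
proof -
  have pr: "prime CHAR('a)"
    using prime_CHAR_semidom[where ?'a = 'a] finite_imp_CHAR_pos[where ?'a='a] by auto
  have "of_nat (p ^ (2*k)) = (0::'a)" using of_nat_card_zero[where ?'a='a] card qdef
    by (simp add: power_mult mult.commute)
  then have "CHAR('a) dvd p ^ (2*k)" using of_nat_eq_0_iff_char_dvd by blast
  then have "CHAR('a) dvd p" using pr prime_dvd_power by blast
  then show ?thesis using pr p(1) primes_dvd_imp_eq by blast
qed

lemma q_odd: "odd q" using p qdef by simp

lemma q_pos: "q > 0" using p qdef prime_gt_0_nat by simp

lemma frob_add: "(x + y :: 'a) ^ q = x ^ q + y ^ q"
  by (rule freshmans_dream') (use CHAR p qdef in auto)

lemma frob_neg: "(- x :: 'a) ^ q = - (x ^ q)"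
  using q_odd by (simp add: power_minus_odd)

lemma frob_diff: "(x - y :: 'a) ^ q = x ^ q - y ^ q"
  using frob_add[of x "-y"] frob_neg[of y] by simp

lemma frob_frob: "((x :: 'a) ^ q) ^ q = x"
  using field_pow_card_same[of x] card by (simp add: power_mult[symmetric] power2_eq_square)

lemma two_nz: "(2::'a) \<noteq> 0"
proof
  assume "(2::'a) = 0"
  then have "of_nat 2 = (0::'a)" by simp
  then have "p dvd 2" using of_nat_eq_0_iff_char_dvd CHAR by metis
  then show False using p by (metis dvd_refl prime_nat_iff two_is_prime_nat dvd_antisym
        even_numeral primes_dvd_imp_eq)
qed

lemma one_neq_mone: "(1::'a) \<noteq> -1"
  using two_nz by (metis one_add_one add_eq_0_iff)

lemma F_0[simp]: "(0::'a) \<in> Fq q" using q_pos by (simp add: Fq_def)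
lemma F_1[simp]: "(1::'a) \<in> Fq q" by (simp add: Fq_def)
lemma F_add[intro]: "(x::'a) \<in> Fq q \<Longrightarrow> y \<in> Fq q \<Longrightarrow> x + y \<in> Fq q" by (simp add: Fq_def frob_add)
lemma F_diff[intro]: "(x::'a) \<in> Fq q \<Longrightarrow> y \<in> Fq q \<Longrightarrow> x - y \<in> Fq q" by (simp add: Fq_def frob_diff)
lemma F_neg[intro]: "(x::'a) \<in> Fq q \<Longrightarrow> - x \<in> Fq q" by (simp add: Fq_def frob_neg)
lemma F_mult[intro]: "(x::'a) \<in> Fq q \<Longrightarrow> y \<in> Fq q \<Longrightarrow> x * y \<in> Fq q" by (simp add: Fq_def power_mult_distrib)
lemma F_div[intro]: "(x::'a) \<in> Fq q \<Longrightarrow> y \<in> Fq q \<Longrightarrow> x / y \<in> Fq q" by (simp add: Fq_def power_divide)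
lemma F_pow[intro]: "(x::'a) \<in> Fq q \<Longrightarrow> x ^ n \<in> Fq q" by (induction n) auto
lemma F_2[simp]: "(2::'a) \<in> Fq q" using F_add[OF F_1 F_1] by (simp add: one_add_one)

lemmas Fcl = F_add F_diff F_neg F_mult F_div F_pow F_0 F_1 F_2

lemma b_nz: "b \<noteq> 0" using bchi by (auto simp: chi2_def)

lemma beta_notF: "\<beta> \<notin> Fq q"
proof
  assume "\<beta> \<in> Fq q"
  then have "chi2 q b = 1" using b_nz beta by (auto simp: chi2_def)
  then show False using bchi by simp
qed

lemma beta_nz: "\<beta> \<noteq> 0" using beta_notF F_0 by metis

lemma beta_q: "\<beta> ^ q = - \<beta>"
proof -
  have "(\<beta> ^ q) ^ 2 = (\<beta> ^ 2) ^ q" by (metis power_mult mult.commute)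
  also have "\<dots> = \<beta> ^ 2" using bF beta by (simp add: Fq_def)
  finally have "(\<beta> ^ q) ^ 2 = \<beta> ^ 2" .
  then have "\<beta> ^ q = \<beta> \<or> \<beta> ^ q = - \<beta>" using power2_eq_iff by blast
  moreover have "\<beta> ^ q \<noteq> \<beta>" using beta_notF by (auto simp: Fq_def)
  ultimately show ?thesis by blast
qed

lemma conjg: "x \<in> Fq q \<Longrightarrow> y \<in> Fq q \<Longrightarrow> (x + y * \<beta>) ^ q = x - y * \<beta>"
  by (simp add: frob_add power_mult_distrib beta_q Fq_def)

lemma decomp_inj:
  assumes "x \<in> Fq q" "y \<in> Fq q" "x' \<in> Fq q" "y' \<in> Fq q" "x + y * \<beta> = x' + y' * \<beta>"
  shows "x = x' \<and> y = y'"
proof (cases "y = y'")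
  case True then show ?thesis using assms by simp
next
  case False
  have "(y' - y) * \<beta> = x - x'" using assms(5) by (simp add: algebra_simps)
  then have "\<beta> = (x - x') / (y' - y)" using False by (simp add: eq_divide_eq mult.commute)
  then have "\<beta> \<in> Fq q" using assms by auto
  then show ?thesis using beta_notF by simp
qed

lemma decomp_surj: "\<exists>x\<in>Fq q. \<exists>y\<in>Fq q. X = x + y * \<beta>"
proof -
  define x where "x = (X + X ^ q) / 2"
  define y where "y = (X - X ^ q) / (2 * \<beta>)"
  have two: "(2::'a) ^ q = 2" using F_2 by (simp add: Fq_def)
  have xF: "x \<in> Fq q"
  proof -
  have "x ^ q = (X ^ q + (X ^ q) ^ q) / 2 ^ q" unfolding x_def
    by (simp add: power_divide frob_add)
  also have "\<dots> = x" unfolding x_def two frob_frob by (simp add: add.commute)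
  finally show "x \<in> Fq q" by (simp add: Fq_def)
  qed
  have yF: "y \<in> Fq q"
  proof -
  have "y ^ q = (X ^ q - (X ^ q) ^ q) / (2 ^ q * \<beta> ^ q)" unfolding y_def
    by (simp add: power_divide frob_diff power_mult_distrib)
  also have "\<dots> = (X ^ q - X) / (- (2 * \<beta>))" unfolding two frob_frob beta_q by simp
  also have "\<dots> = y" unfolding y_def using beta_nz two_nz by (simp add: field_simps)
  finally show "y \<in> Fq q" by (simp add: Fq_def)
  qed
  have yb: "y * \<beta> = (X - X ^ q) / 2" unfolding y_def using beta_nz by simp
  have "x + y * \<beta> = ((X + X ^ q) + (X - X ^ q)) / 2" unfolding x_def yb
    by (simp only: add_divide_distrib)
  also have "\<dots> = (2 * X) / 2" by (simp add: algebra_simps)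
  also have "\<dots> = X" using two_nz by simp
  finally have "X = x + y * \<beta>" by simp
  then show ?thesis using xF yF by blast
qed

definition emb :: "'a \<times> 'a \<Rightarrow> 'a" where "emb = (\<lambda>(x, y). x + y * \<beta>)"

lemma emb_bij: "bij_betw emb (Fq q \<times> Fq q) UNIV"
  unfolding bij_betw_def
proof
  show "inj_on emb (Fq q \<times> Fq q)" unfolding inj_on_def emb_def
    using decomp_inj by auto
  show "emb ` (Fq q \<times> Fq q) = UNIV"
  proof (rule set_eqI, rule iffI)
    fix X :: 'a assume "X \<in> UNIV"
    obtain x y where "x \<in> Fq q" "y \<in> Fq q" "X = x + y * \<beta>" using decomp_surj by blast
    then show "X \<in> emb ` (Fq q \<times> Fq q)" unfolding emb_def by force
  qed auto
qed

lemma card_F: "card (Fq q :: 'a set) = q"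
proof -
  have "card (Fq q \<times> Fq q :: ('a \<times> 'a) set) = q ^ 2"
    using bij_betw_same_card[OF emb_bij] card by simp
  then have "card (Fq q :: 'a set) ^ 2 = q ^ 2" by (simp add: card_cartesian_product power2_eq_square)
  then show ?thesis by (simp add: power_eq_iff_eq_base)
qed

lemma q_ge3: "q \<ge> 3"
proof -
  have "p \<ge> 2" using p prime_ge_2_nat by blast
  then have "p \<ge> 3" using p by presburger
  have "p ^ 1 \<le> p ^ k" using k \<open>p \<ge> 2\<close> by (intro power_increasing) auto
  then show ?thesis using \<open>p \<ge> 3\<close> qdef by simp
qed

definition mq :: nat where "mq = (q - 1) div 2"

lemma q_mq: "q - 1 = 2 * mq" using q_odd unfolding mq_def by presburger

lemma mq_pos: "mq > 0" using q_ge3 q_mq by simp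

lemma F_pow_q1: "(u::'a) \<in> Fq q \<Longrightarrow> u \<noteq> 0 \<Longrightarrow> u ^ (q - 1) = 1"
proof -
  assume u: "u \<in> Fq q" "u \<noteq> 0"
  have "u * u ^ (q - 1) = u ^ q" using q_pos by (simp add: power_eq_if)
  also have "\<dots> = u" using u by (simp add: Fq_def)
  finally show ?thesis using u by simp
qed

lemma euler_pm: "(u::'a) \<in> Fq q \<Longrightarrow> u \<noteq> 0 \<Longrightarrow> u ^ mq = 1 \<or> u ^ mq = -1"
proof -
  assume u: "u \<in> Fq q" "u \<noteq> 0"
  have "(u ^ mq) ^ 2 = 1" using F_pow_q1[OF u] q_mq by (simp add: power_mult[symmetric] mult.commute)
  then show ?thesis using power2_eq_1_iff by blast
qed

definition Sq :: "'a set" where "Sq = {u \<in> Fq q. u \<noteq> 0 \<and> (\<exists>y\<in>Fq q. y ^ 2 = u)}"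

lemma card_R: "card {u::'a. u ^ mq = 1} \<le> mq"
proof -
  define P :: "'a poly" where "P = [:-1:] + monom 1 mq"
  have dP: "degree P = mq" unfolding P_def using mq_pos
    by (subst degree_add_eq_right) (auto simp: degree_monom_eq)
  have "P \<noteq> 0" using dP mq_pos by auto
  moreover have "{u::'a. u ^ mq = 1} = {x. poly P x = 0}"
    unfolding P_def by (auto simp: poly_monom)
  ultimately show ?thesis using card_poly_roots_bound[of P] dP by simp
qed

lemma Sq_sub: "Sq \<subseteq> {u::'a. u ^ mq = 1}"
proof
  fix u assume "u \<in> Sq"
  then obtain y where y: "y \<in> Fq q" "y ^ 2 = u" "u \<noteq> 0" unfolding Sq_def by blast
  then have "y \<noteq> 0" by auto
  then have "y ^ (q - 1) = 1" using F_pow_q1 y by blast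
  then show "u \<in> {u. u ^ mq = 1}" using y q_mq by (simp add: power_mult)
qed

lemma card_Sq: "card Sq \<ge> mq"
proof -
  have fin: "finite Sq" by simp
  have "Fq q - {0} \<subseteq> (\<Union>s\<in>Sq. {y::'a. y ^ 2 = s})"
  proof
    fix y :: 'a assume "y \<in> Fq q - {0}"
    then have "y ^ 2 \<in> Sq" unfolding Sq_def by auto
    then show "y \<in> (\<Union>s\<in>Sq. {y::'a. y ^ 2 = s})" by blast
  qed
  then have "card (Fq q - {0::'a}) \<le> card (\<Union>s\<in>Sq. {y::'a. y ^ 2 = s})"
    by (intro card_mono) auto
  also have "\<dots> \<le> (\<Sum>s\<in>Sq. card {y::'a. y ^ 2 = s})" by (rule card_UN_le[OF fin])
  also have "\<dots> \<le> (\<Sum>s\<in>Sq. 2)"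
  proof (rule sum_mono)
    fix s assume "s \<in> Sq"
    then obtain r where r: "r ^ 2 = s" unfolding Sq_def by blast
    have "{y::'a. y ^ 2 = s} \<subseteq> {r, -r}" using r power2_eq_iff by auto
    then have "card {y::'a. y ^ 2 = s} \<le> card {r, -r}" by (intro card_mono) auto
    also have "\<dots> \<le> 2" by (simp add: card_insert_if)
    finally show "card {y::'a. y ^ 2 = s} \<le> 2" .
  qed
  finally have "card (Fq q - {0::'a}) \<le> 2 * card Sq" by simp
  moreover have "card (Fq q - {0::'a}) = q - 1" using card_F by (simp add: card_Diff_singleton)
  ultimately show ?thesis using q_mq by simp
qed

lemma Sq_eq: "Sq = {u::'a. u ^ mq = 1}"
proof (rule card_subset_eq[OF _ Sq_sub])
  show "finite {u::'a. u ^ mq = 1}" by simp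
  have "card Sq \<le> card {u::'a. u ^ mq = 1}" by (rule card_mono[OF _ Sq_sub]) simp
  then show "card Sq = card {u::'a. u ^ mq = 1}" using card_Sq card_R by linarith
qed

lemma euler: "(u::'a) \<in> Fq q \<Longrightarrow> u \<noteq> 0 \<Longrightarrow> (\<exists>y\<in>Fq q. y ^ 2 = u) \<longleftrightarrow> u ^ mq = 1"
  using Sq_eq unfolding Sq_def by blast

lemma chi_euler: "(u::'a) \<in> Fq q \<Longrightarrow> u \<noteq> 0 \<Longrightarrow> chi2 q u = (if u ^ mq = 1 then 1 else -1)"
  using euler unfolding chi2_def by auto

lemma chi_pm: "(u::'a) \<noteq> 0 \<Longrightarrow> chi2 q u = 1 \<or> chi2 q u = -1"
  unfolding chi2_def by auto

lemma chi_mult: "(u::'a) \<in> Fq q \<Longrightarrow> v \<in> Fq q \<Longrightarrow> u \<noteq> 0 \<Longrightarrow> v \<noteq> 0 \<Longrightarrow>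
    chi2 q (u * v) = chi2 q u * chi2 q v"
  using chi_euler[of u] chi_euler[of v] chi_euler[of "u*v"] euler_pm[of u] euler_pm[of v]
    one_neq_mone F_mult[of u v] by (auto simp: power_mult_distrib)

lemma chi_1: "chi2 q (1::'a) = 1"
  unfolding chi2_def using F_1 by (metis one_neq_zero power_one)

lemma chi_inv: "(u::'a) \<in> Fq q \<Longrightarrow> u \<noteq> 0 \<Longrightarrow> chi2 q (inverse u) = chi2 q u"
proof -
  assume u: "u \<in> Fq q" "u \<noteq> 0"
  have iF: "inverse u \<in> Fq q" using F_div[OF F_1 u(1)] by (simp add: inverse_eq_divide)
  have "chi2 q u * chi2 q (inverse u) = 1"
    using chi_mult[OF u(1) iF u(2)] u chi_1 by simp
  then show ?thesis using chi_pm[of u] u by auto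
qed

lemma chi_div: "(u::'a) \<in> Fq q \<Longrightarrow> v \<in> Fq q \<Longrightarrow> u \<noteq> 0 \<Longrightarrow> v \<noteq> 0 \<Longrightarrow>
    chi2 q (u / v) = chi2 q u * chi2 q v"
proof -
  assume a: "u \<in> Fq q" "v \<in> Fq q" "u \<noteq> 0" "v \<noteq> 0"
  have iF: "inverse v \<in> Fq q" using F_div[OF F_1 a(2)] by (simp add: inverse_eq_divide)
  show ?thesis using chi_mult[OF a(1) iF a(3)] a chi_inv[OF a(2) a(4)]
    by (simp add: divide_inverse)
qed

lemma chi_m1: "chi2 q (-1::'a) = (if q mod 4 = 1 then 1 else -1)"
proof -
  have m1F: "(-1::'a) \<in> Fq q" using F_neg[OF F_1] .
  have e: "chi2 q (-1::'a) = (if (-1::'a) ^ mq = 1 then 1 else -1)"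
    using chi_euler[OF m1F] by simp
  have ev: "even mq \<longleftrightarrow> q mod 4 = 1" using q_mq q_odd q_pos by presburger
  show ?thesis
  proof (cases "even mq")
    case True then show ?thesis using e ev by simp
  next
    case False
    then have "(-1::'a) ^ mq = -1" by simp
    then show ?thesis using e ev False one_neq_mone by (metis (mono_tags))
  qed
qed

lemma card_sqrt: "(s::'a) \<in> Fq q \<Longrightarrow> s \<noteq> 0 \<Longrightarrow>
    card {x \<in> Fq q. x ^ 2 = s} = (if chi2 q s = 1 then 2 else 0)"
proof -
  assume s: "s \<in> Fq q" "s \<noteq> 0"
  show ?thesis
  proof (cases "\<exists>y\<in>Fq q. y ^ 2 = s")
    case True
    then obtain r where r: "r \<in> Fq q" "r ^ 2 = s" by blast
    then have "r \<noteq> 0" using s by auto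
    have "r \<noteq> - r"
    proof
      assume "r = - r"
      then have "r + r = 0" by (metis add.right_inverse)
      then have "2 * r = 0" unfolding mult_2 .
      then show False using two_nz \<open>r \<noteq> 0\<close> by simp
    qed
    have "{x \<in> Fq q. x ^ 2 = s} = {r, -r}" using r power2_eq_iff by auto
    moreover have "chi2 q s = 1" using True s by (simp add: chi2_def)
    ultimately show ?thesis using \<open>r \<noteq> - r\<close> by simp
  next
    case False
    then have "{x \<in> Fq q. x ^ 2 = s} = {}" by auto
    moreover have "chi2 q s = -1" using False s by (simp add: chi2_def)
    ultimately show ?thesis by simp
  qed
qed

lemma eqF: "u \<in> Fq q \<Longrightarrow> v \<in> Fq q \<Longrightarrow> u' \<in> Fq q \<Longrightarrow> v' \<in> Fq q \<Longrightarrow>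
   (u + v * \<beta> = u' + v' * \<beta>) \<longleftrightarrow> u = u' \<and> v = v'"
  using decomp_inj by blast

lemma fmap_emb: "x \<in> Fq q \<Longrightarrow> y \<in> Fq q \<Longrightarrow>
   fmap q (a::'a) (x + y * \<beta>) = ((1 + a) * x ^ 2 + (a - 1) * b * y ^ 2) + (2 * a * x * y) * \<beta>"
proof -
  assume xy: "x \<in> Fq q" "y \<in> Fq q"
  have "(x + y * \<beta>) ^ (q + 1) = (x + y * \<beta>) ^ q * (x + y * \<beta>)" by simp
  also have "\<dots> = (x - y * \<beta>) * (x + y * \<beta>)" using conjg[OF xy] by simp
  finally have "(x + y * \<beta>) ^ (q + 1) = (x - y * \<beta>) * (x + y * \<beta>)" .
  then show ?thesis unfolding fmap_def beta[symmetric]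
    by (simp add: algebra_simps power2_eq_square)
qed

lemma card_fiber: "card {X. fmap q a X = g} = card {z \<in> Fq q \<times> Fq q. fmap q a (emb z) = g}"
proof -
  have inj: "inj_on emb (Fq q \<times> Fq q)" using emb_bij bij_betw_def by blast
  have "{X. fmap q a X = g} = emb ` {z \<in> Fq q \<times> Fq q. fmap q a (emb z) = g}"
  proof (rule set_eqI, rule iffI)
    fix X assume X: "X \<in> {X. fmap q a X = g}"
    obtain x y where "x \<in> Fq q" "y \<in> Fq q" "X = x + y * \<beta>" using decomp_surj by blast
    then show "X \<in> emb ` {z \<in> Fq q \<times> Fq q. fmap q a (emb z) = g}"
      using X unfolding emb_def by (intro image_eqI[of _ _ "(x, y)"]) auto
  qed auto
  then show ?thesis using inj by (simp add: card_image inj_on_subset[OF inj])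
qed

lemma chi_sq: "(r::'a) \<in> Fq q \<Longrightarrow> r \<noteq> 0 \<Longrightarrow> chi2 q (r ^ 2) = 1"
  unfolding chi2_def by auto

lemma part1:
  fixes a \<alpha> :: 'a
  assumes aF: "a \<in> Fq q" and a0: "a \<noteq> 0" and a1: "a \<noteq> 1" and am1: "a \<noteq> -1"
    and alF: "\<alpha> \<in> Fq q" and al0: "\<alpha> \<noteq> 0"
  shows "card {X. fmap q a X = \<alpha>} =
       (if chi2 q (\<alpha> * (a - 1)) = 1 \<and> chi2 q (\<alpha> * (a + 1)) = -1 then 0
        else if chi2 q (\<alpha> * (a - 1)) = -1 \<and> chi2 q (\<alpha> * (a + 1)) = 1 then 4
        else 2)"
proof -
  have ap: "1 + a \<noteq> 0" using am1 by (metis add.commute add_eq_0_iff)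
  have am: "a - 1 \<noteq> 0" using a1 by simp
  have amb: "(a - 1) * b \<noteq> 0" using am b_nz by simp
  have apF: "1 + a \<in> Fq q" using aF by (intro Fcl)
  have amF: "a - 1 \<in> Fq q" using aF by (intro Fcl)
  have ambF: "(a - 1) * b \<in> Fq q" using aF bF by (intro Fcl)
  define Ax where "Ax = {x \<in> Fq q. x ^ 2 = \<alpha> / (1 + a)}"
  define By where "By = {y \<in> Fq q. y ^ 2 = \<alpha> / ((a - 1) * b)}"
  have T: "{z \<in> Fq q \<times> Fq q. fmap q a (emb z) = \<alpha>} = (\<lambda>x. (x, 0)) ` Ax \<union> (\<lambda>y. (0, y)) ` By"
  proof (rule set_eqI)
    fix z :: "'a \<times> 'a"
    obtain x y where z: "z = (x, y)" by (cases z)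
    show "z \<in> {z \<in> Fq q \<times> Fq q. fmap q a (emb z) = \<alpha>} \<longleftrightarrow> z \<in> (\<lambda>x. (x, 0)) ` Ax \<union> (\<lambda>y. (0, y)) ` By"
    proof (cases "x \<in> Fq q \<and> y \<in> Fq q")
      case False
      then show ?thesis unfolding z Ax_def By_def by auto
    next
      case True
      then have xF: "x \<in> Fq q" and yF: "y \<in> Fq q" by auto
      have c1: "(1 + a) * x ^ 2 + (a - 1) * b * y ^ 2 \<in> Fq q" using xF yF aF bF by (intro Fcl)
      have c2: "2 * a * x * y \<in> Fq q" using xF yF aF by (intro Fcl)
      have "fmap q a (emb z) = \<alpha> \<longleftrightarrow>
          (1 + a) * x ^ 2 + (a - 1) * b * y ^ 2 = \<alpha> \<and> 2 * a * x * y = 0"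
        unfolding z emb_def using fmap_emb[OF xF yF, of a] eqF[OF c1 c2 alF F_0] by simp
      also have "\<dots> \<longleftrightarrow> (y = 0 \<and> x ^ 2 = \<alpha> / (1 + a)) \<or> (x = 0 \<and> y ^ 2 = \<alpha> / ((a - 1) * b))"
        using two_nz a0 al0 ap amb
        by (auto simp: eq_divide_eq mult.commute)
      finally show ?thesis unfolding z Ax_def By_def using xF yF by auto
    qed
  qed
  have dis: "(\<lambda>x. (x, 0)) ` Ax \<inter> (\<lambda>y. (0, y)) ` By = {}"
    unfolding Ax_def using al0 ap by auto
  have cT: "card {z \<in> Fq q \<times> Fq q. fmap q a (emb z) = \<alpha>} = card Ax + card By"
    unfolding T by (subst card_Un_disjoint) (auto simp: dis card_image inj_on_def)
  have s1F: "\<alpha> / (1 + a) \<in> Fq q" using alF aF by (intro Fcl)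
  have s2F: "\<alpha> / ((a - 1) * b) \<in> Fq q" using alF aF bF by (intro Fcl)
  have cA: "card Ax = (if chi2 q (\<alpha> * (a + 1)) = 1 then 2 else 0)"
  proof -
    have "chi2 q (\<alpha> / (1 + a)) = chi2 q \<alpha> * chi2 q (1 + a)"
      using chi_div[OF alF apF al0 ap] .
    also have "\<dots> = chi2 q (\<alpha> * (a + 1))"
      using chi_mult[OF alF apF al0 ap] by (simp add: add.commute)
    finally show ?thesis unfolding Ax_def using card_sqrt[OF s1F] al0 ap by simp
  qed
  have cB: "card By = (if chi2 q (\<alpha> * (a - 1)) = -1 then 2 else 0)"
  proof -
    have "chi2 q (\<alpha> / ((a - 1) * b)) = chi2 q \<alpha> * (chi2 q (a - 1) * chi2 q b)"
      using chi_div[OF alF ambF al0 amb] chi_mult[OF amF bF am b_nz] by simp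
    also have "\<dots> = - chi2 q (\<alpha> * (a - 1))"
      using chi_mult[OF alF amF al0 am] bchi by simp
    finally have "chi2 q (\<alpha> / ((a - 1) * b)) = - chi2 q (\<alpha> * (a - 1))" .
    moreover have "chi2 q (\<alpha> * (a - 1)) = 1 \<or> chi2 q (\<alpha> * (a - 1)) = -1"
      using chi_pm al0 am by simp
    ultimately show ?thesis unfolding By_def using card_sqrt[OF s2F] al0 amb by auto
  qed
  have "chi2 q (\<alpha> * (a + 1)) = 1 \<or> chi2 q (\<alpha> * (a + 1)) = -1"
    using chi_pm al0 ap by (simp add: add.commute)
  moreover have "chi2 q (\<alpha> * (a - 1)) = 1 \<or> chi2 q (\<alpha> * (a - 1)) = -1"
    using chi_pm al0 am by simp
  ultimately show ?thesis using card_fiber[of a \<alpha>] cT cA cB by auto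
qed

lemma key_eq:
  fixes a w x :: 'a
  assumes "x \<noteq> 0" "1 + a \<noteq> 0"
  shows "((1 + a) * x ^ 2 + (a - 1) * b * (w / x) ^ 2 = 0) \<longleftrightarrow>
         x ^ 4 = w ^ 2 * (- ((a - 1) * b / (a + 1)))"
proof -
  have ap: "a + 1 \<noteq> 0" using assms(2) by (simp add: add.commute)
  have "((1 + a) * x ^ 2 + (a - 1) * b * (w / x) ^ 2 = 0) \<longleftrightarrow>
        ((1 + a) * x ^ 2 + (a - 1) * b * (w / x) ^ 2) * (x ^ 2 / (1 + a)) = 0"
    using assms by simp
  also have "((1 + a) * x ^ 2 + (a - 1) * b * (w / x) ^ 2) * (x ^ 2 / (1 + a)) =
      x ^ 4 + (a - 1) * b * w ^ 2 / (a + 1)"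
  proof -
    have p1: "(1 + a) * x ^ 2 * (x ^ 2 / (1 + a)) = x ^ 4"
      using assms by (simp add: power2_eq_square numeral_eq_Suc)
    have p2: "(a - 1) * b * (w / x) ^ 2 * (x ^ 2 / (1 + a)) = (a - 1) * b * w ^ 2 / (a + 1)"
      using assms by (simp add: power_divide add.commute)
    have e: "((1 + a) * x ^ 2 + (a - 1) * b * (w / x) ^ 2) * (x ^ 2 / (1 + a)) =
       (1 + a) * x ^ 2 * (x ^ 2 / (1 + a)) + (a - 1) * b * (w / x) ^ 2 * (x ^ 2 / (1 + a))"
      by (rule distrib_right)
    show ?thesis by (simp only: e p1 p2)
  qed
  also have "(\<dots> = 0) \<longleftrightarrow> x ^ 4 = w ^ 2 * (- ((a - 1) * b / (a + 1)))"
    by (auto simp: add_eq_0_iff2 field_simps)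
  finally show ?thesis .
qed

lemma card_T2:
  fixes a \<alpha> :: 'a
  assumes aF: "a \<in> Fq q" and a0: "a \<noteq> 0" and a1: "a \<noteq> 1" and am1: "a \<noteq> -1"
    and alF: "\<alpha> \<in> Fq q" and al0: "\<alpha> \<noteq> 0"
  shows "card {X. fmap q a X = \<alpha> * \<beta>} =
     card {x \<in> Fq q. x ^ 4 = (\<alpha> / (2 * a)) ^ 2 * (- ((a - 1) * b / (a + 1)))}"
proof -
  have ap: "1 + a \<noteq> 0" using am1 by (metis add.commute add_eq_0_iff)
  have ap': "a + 1 \<noteq> 0" using ap by (simp add: add.commute)
  have am: "a - 1 \<noteq> 0" using a1 by simp
  define w where "w = \<alpha> / (2 * a)"
  define t where "t = - ((a - 1) * b / (a + 1))"
  have wF: "w \<in> Fq q" unfolding w_def using alF aF by (intro Fcl)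
  have w0: "w \<noteq> 0" unfolding w_def using al0 a0 two_nz by simp
  have t0: "t \<noteq> 0" unfolding t_def using am b_nz ap' by simp
  define T where "T = {z \<in> Fq q \<times> Fq q. fmap q a (emb z) = \<alpha> * \<beta>}"
  have memT: "(x, y) \<in> T \<longleftrightarrow> x \<in> Fq q \<and> y \<in> Fq q \<and> x \<noteq> 0 \<and> y = w / x \<and> x ^ 4 = w ^ 2 * t"
    for x y
  proof (cases "x \<in> Fq q \<and> y \<in> Fq q")
    case False then show ?thesis unfolding T_def by auto
  next
    case True
    then have xF: "x \<in> Fq q" and yF: "y \<in> Fq q" by auto
    have c1: "(1 + a) * x ^ 2 + (a - 1) * b * y ^ 2 \<in> Fq q" using xF yF aF bF by (intro Fcl)
    have c2: "2 * a * x * y \<in> Fq q" using xF yF aF by (intro Fcl)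
    have "(x, y) \<in> T \<longleftrightarrow> (1 + a) * x ^ 2 + (a - 1) * b * y ^ 2 = 0 \<and> 2 * a * x * y = \<alpha>"
      unfolding T_def emb_def using True fmap_emb[OF xF yF, of a] eqF[OF c1 c2 F_0 alF] by simp
    also have "\<dots> \<longleftrightarrow> x \<noteq> 0 \<and> y = w / x \<and> (1 + a) * x ^ 2 + (a - 1) * b * (w / x) ^ 2 = 0"
    proof
      assume h: "(1 + a) * x ^ 2 + (a - 1) * b * y ^ 2 = 0 \<and> 2 * a * x * y = \<alpha>"
      then have x0: "x \<noteq> 0" using al0 by auto
      have "y = w / x" unfolding w_def using h x0 a0 two_nz by (auto simp: field_simps)
      then show "x \<noteq> 0 \<and> y = w / x \<and> (1 + a) * x ^ 2 + (a - 1) * b * (w / x) ^ 2 = 0"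
        using h x0 by simp
    next
      assume h: "x \<noteq> 0 \<and> y = w / x \<and> (1 + a) * x ^ 2 + (a - 1) * b * (w / x) ^ 2 = 0"
      then have "2 * a * x * y = \<alpha>" unfolding w_def using a0 two_nz by (auto simp: field_simps)
      then show "(1 + a) * x ^ 2 + (a - 1) * b * y ^ 2 = 0 \<and> 2 * a * x * y = \<alpha>" using h by simp
    qed
    also have "\<dots> \<longleftrightarrow> x \<noteq> 0 \<and> y = w / x \<and> x ^ 4 = w ^ 2 * t"
      unfolding t_def using key_eq[OF _ ap, of x w] by blast
    finally show ?thesis using True by simp
  qed
  have inj: "inj_on fst T"
    unfolding inj_on_def using memT by (metis prod.collapse)
  have img: "fst ` T = {x \<in> Fq q. x ^ 4 = w ^ 2 * t}"
  proof (rule set_eqI, rule iffI)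
    fix x assume "x \<in> fst ` T"
    then obtain y where "(x, y) \<in> T" by force
    then show "x \<in> {x \<in> Fq q. x ^ 4 = w ^ 2 * t}" using memT by simp
  next
    fix x assume x: "x \<in> {x \<in> Fq q. x ^ 4 = w ^ 2 * t}"
    then have x0: "x \<noteq> 0" using w0 t0 by auto
    have "w / x \<in> Fq q" using wF x by (intro Fcl) auto
    then have "(x, w / x) \<in> T" using memT x x0 by simp
    then show "x \<in> fst ` T" by force
  qed
  show ?thesis using card_fiber[of a "\<alpha> * \<beta>"] card_image[OF inj] img
    unfolding T_def w_def t_def by simp
qed

lemma count4:
  fixes s :: 'a
  assumes sF: "s \<in> Fq q" and s0: "s \<noteq> 0"
  shows "card {x \<in> Fq q. x ^ 4 = s ^ 2} =
     (if chi2 q s = 1 then 2 else 0) + (if chi2 q (- s) = 1 then 2 else 0)"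
proof -
  have ss: "s \<noteq> - s"
  proof
    assume "s = - s"
    then have "s + s = 0" by (metis add.right_inverse)
    then have "2 * s = 0" unfolding mult_2 .
    then show False using two_nz s0 by simp
  qed
  have eq: "{x \<in> Fq q. x ^ 4 = s ^ 2} = {x \<in> Fq q. x ^ 2 = s} \<union> {x \<in> Fq q. x ^ 2 = - s}"
  proof -
    have "x ^ 4 = s ^ 2 \<longleftrightarrow> x ^ 2 = s \<or> x ^ 2 = - s" for x :: 'a
    proof -
      have "x ^ 4 = (x ^ 2) ^ 2" by (simp flip: power_mult)
      then show ?thesis using power2_eq_iff[of "x ^ 2" s] by simp
    qed
    then show ?thesis by auto
  qed
  have dis: "{x \<in> Fq q. x ^ 2 = s} \<inter> {x \<in> Fq q. x ^ 2 = - s} = {}" using ss by auto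
  have msF: "- s \<in> Fq q" using sF by (intro Fcl)
  have ms0: "- s \<noteq> 0" using s0 by simp
  show ?thesis unfolding eq
    using card_Un_disjoint[OF _ _ dis] card_sqrt[OF sF s0] card_sqrt[OF msF ms0] by simp
qed

lemma chi_t:
  fixes a :: 'a
  assumes aF: "a \<in> Fq q" and a1: "a \<noteq> 1" and am1: "a \<noteq> -1"
  shows "chi2 q (- ((a - 1) * b / (a + 1))) = - chi2 q (1 - a ^ 2)"
proof -
  have ap': "a + 1 \<noteq> 0" using am1 by (metis add.commute add_eq_0_iff)
  have am: "a - 1 \<noteq> 0" using a1 by simp
  have u0: "1 - a ^ 2 \<noteq> 0"
  proof
    assume "1 - a ^ 2 = 0"
    then have "(1 - a) * (1 + a) = 0" by (simp add: algebra_simps power2_eq_square)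
    then show False using am ap' by (auto simp: add.commute)
  qed
  have uF: "1 - a ^ 2 \<in> Fq q" using aF by (intro Fcl)
  have apF: "a + 1 \<in> Fq q" using aF by (intro Fcl)
  have ubF: "(1 - a ^ 2) * b \<in> Fq q" using F_mult[OF uF bF] .
  have a2F: "(a + 1) ^ 2 \<in> Fq q" using F_pow[OF apF] .
  have h: "(1 - a ^ 2) * b = (- ((a - 1) * b)) * (a + 1)" by (simp add: algebra_simps power2_eq_square)
  have "(1 - a ^ 2) * b / (a + 1) ^ 2 = ((- ((a - 1) * b)) * (a + 1)) / ((a + 1) * (a + 1))"
    by (subst h) (simp only: power2_eq_square)
  also have "\<dots> = (- ((a - 1) * b)) / (a + 1)"
    by (rule nonzero_mult_divide_mult_cancel_right[OF ap'])
  finally have eq: "- ((a - 1) * b / (a + 1)) = (1 - a ^ 2) * b / (a + 1) ^ 2" by simp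
  have "chi2 q ((1 - a ^ 2) * b / (a + 1) ^ 2) = chi2 q ((1 - a ^ 2) * b) * chi2 q ((a + 1) ^ 2)"
    using chi_div[OF ubF a2F] u0 b_nz ap' by simp
  also have "\<dots> = chi2 q (1 - a ^ 2) * chi2 q b"
    using chi_sq[OF apF ap'] chi_mult[OF uF bF u0 b_nz] by simp
  finally show ?thesis using eq bchi by simp
qed

lemma c_empty:
  fixes t w :: 'a
  assumes "chi2 q t = -1" "w \<in> Fq q" "w \<noteq> 0"
  shows "card {x \<in> Fq q. x ^ 4 = w ^ 2 * t} = 0"
proof -
  have "{x \<in> Fq q. x ^ 4 = w ^ 2 * t} = {}"
  proof (rule ccontr)
    assume "{x \<in> Fq q. x ^ 4 = w ^ 2 * t} \<noteq> {}"
    then obtain x where x: "x \<in> Fq q" "x ^ 4 = w ^ 2 * t" by auto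
    have "t \<noteq> 0" using assms(1) by (auto simp: chi2_def)
    have "(x ^ 2 / w) ^ 2 = t" using x assms(3)
      by (simp add: power_divide flip: power_mult)
    moreover have "x ^ 2 / w \<in> Fq q" using x assms by (intro Fcl)
    ultimately have "chi2 q t = 1" using \<open>t \<noteq> 0\<close> unfolding chi2_def by auto
    then show False using assms(1) by simp
  qed
  then show ?thesis by simp
qed

lemma sq_count:
  fixes a \<alpha> \<gamma> :: 'a
  assumes aF: "a \<in> Fq q" and a0: "a \<noteq> 0" and a1: "a \<noteq> 1" and am1: "a \<noteq> -1"
    and alF: "\<alpha> \<in> Fq q" and al0: "\<alpha> \<noteq> 0"
    and gF: "\<gamma> \<in> Fq q" and g2: "\<gamma> ^ 2 = - ((a - 1) * b / (a + 1))"
  shows "card {X. fmap q a X = \<alpha> * \<beta>} =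
     (if chi2 q (2 * \<gamma> * \<alpha> * a) = 1 then 2 else 0) +
     (if chi2 q (-1::'a) * chi2 q (2 * \<gamma> * \<alpha> * a) = 1 then 2 else 0)"
proof -
  have ap': "a + 1 \<noteq> 0" using am1 by (metis add.commute add_eq_0_iff)
  have am: "a - 1 \<noteq> 0" using a1 by simp
  define w where "w = \<alpha> / (2 * a)"
  have wF: "w \<in> Fq q" unfolding w_def using alF aF by (intro Fcl)
  have w0: "w \<noteq> 0" unfolding w_def using al0 a0 two_nz by simp
  have g0: "\<gamma> \<noteq> 0" using g2 am b_nz ap' by auto
  define s where "s = w * \<gamma>"
  have sF: "s \<in> Fq q" unfolding s_def using F_mult[OF wF gF] .
  have s0: "s \<noteq> 0" unfolding s_def using w0 g0 by simp
  have "card {X. fmap q a X = \<alpha> * \<beta>} = card {x \<in> Fq q. x ^ 4 = s ^ 2}"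
  proof -
    have cs: "(\<alpha> / (2 * a)) ^ 2 * (- ((a - 1) * b / (a + 1))) = s ^ 2"
      by (simp only: s_def w_def power_mult_distrib g2)
    show ?thesis using card_T2[OF aF a0 a1 am1 alF al0] unfolding cs .
  qed
  also have "\<dots> = (if chi2 q s = 1 then 2 else 0) + (if chi2 q (- s) = 1 then 2 else 0)"
    by (rule count4[OF sF s0])
  also have "chi2 q (- s) = chi2 q (-1::'a) * chi2 q s"
    using chi_mult[OF F_neg[OF F_1] sF _ s0] by simp
  also have "chi2 q s = chi2 q (2 * \<gamma> * \<alpha> * a)"
  proof -
    have nF: "2 * \<gamma> * \<alpha> * a \<in> Fq q" using gF alF aF by (intro Fcl)
    have n0: "2 * \<gamma> * \<alpha> * a \<noteq> 0" using g0 al0 a0 two_nz by simp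
    have dF: "2 * a \<in> Fq q" using aF by (intro Fcl)
    have d0: "2 * a \<noteq> 0" using a0 two_nz by simp
    have r1: "2 * \<gamma> * \<alpha> * a = (\<gamma> * \<alpha>) * (2 * a)" by (simp add: algebra_simps)
    have r2: "(\<gamma> * \<alpha>) * (2 * a) / ((2 * a) * (2 * a)) = (\<gamma> * \<alpha>) / (2 * a)"
      by (rule nonzero_mult_divide_mult_cancel_right[OF d0])
    have r3: "s = (\<gamma> * \<alpha>) / (2 * a)" unfolding s_def w_def by simp
    have seq: "s = (2 * \<gamma> * \<alpha> * a) / (2 * a) ^ 2"
      unfolding r3 r1 power2_eq_square r2 ..
    have d2: "(2 * a) ^ 2 \<noteq> 0" by (rule power_not_zero[OF d0])
    have c1: "chi2 q s = chi2 q (2 * \<gamma> * \<alpha> * a) * chi2 q ((2 * a) ^ 2)"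
      unfolding seq by (rule chi_div[OF nF F_pow[OF dF] n0 d2])
    have c2: "chi2 q ((2 * a) ^ 2) = 1" by (rule chi_sq[OF dF d0])
    show ?thesis using c1 c2 by (metis mult_1_right)
  qed
  finally show ?thesis .
qed

lemma part23:
  fixes a \<alpha> :: 'a
  assumes aF: "a \<in> Fq q" and a0: "a \<noteq> 0" and a1: "a \<noteq> 1" and am1: "a \<noteq> -1"
    and alF: "\<alpha> \<in> Fq q" and al0: "\<alpha> \<noteq> 0"
  shows "(q mod 4 = 3 \<longrightarrow>
          card {X. fmap q a X = \<alpha> * \<beta>} = (if chi2 q (1 - a ^ 2) = 1 then 0 else 2))
     \<and> (q mod 4 = 1 \<longrightarrow>
          (chi2 q (1 - a ^ 2) = 1 \<longrightarrow> card {X. fmap q a X = \<alpha> * \<beta>} = 0)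
        \<and> (chi2 q (1 - a ^ 2) = -1 \<longrightarrow>
             (\<forall>\<gamma>\<in>Fq q. \<gamma> ^ 2 = - ((a - 1) * b / (a + 1)) \<longrightarrow>
                card {X. fmap q a X = \<alpha> * \<beta>} =
                  (if chi2 q (2 * \<gamma> * \<alpha> * a) = 1 then 4 else 0))))"
proof -
  have ap': "a + 1 \<noteq> 0" using am1 by (metis add.commute add_eq_0_iff)
  have am: "a - 1 \<noteq> 0" using a1 by simp
  define w where "w = \<alpha> / (2 * a)"
  define t where "t = - ((a - 1) * b / (a + 1))"
  have wF: "w \<in> Fq q" unfolding w_def using alF aF by (intro Fcl)
  have w0: "w \<noteq> 0" unfolding w_def using al0 a0 two_nz by simp
  have t0: "t \<noteq> 0" unfolding t_def using am b_nz ap' by simp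
  have ct: "chi2 q t = - chi2 q (1 - a ^ 2)" unfolding t_def by (rule chi_t[OF aF a1 am1])
  have T2: "card {X. fmap q a X = \<alpha> * \<beta>} = card {x \<in> Fq q. x ^ 4 = w ^ 2 * t}"
    unfolding w_def t_def by (rule card_T2[OF aF a0 a1 am1 alF al0])
  have empty: "card {X. fmap q a X = \<alpha> * \<beta>} = 0" if "chi2 q (1 - a ^ 2) = 1"
    using T2 c_empty[OF _ wF w0, of t] ct that by simp
  have pm: "chi2 q (2 * \<gamma> * \<alpha> * a) = 1 \<or> chi2 q (2 * \<gamma> * \<alpha> * a) = -1" if "\<gamma> \<noteq> 0" for \<gamma>
    using chi_pm[of "2 * \<gamma> * \<alpha> * a"] that al0 a0 two_nz by simp
  have P2: "card {X. fmap q a X = \<alpha> * \<beta>} = (if chi2 q (1 - a ^ 2) = 1 then 0 else 2)"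
    if q3: "q mod 4 = 3"
  proof (cases "chi2 q (1 - a ^ 2) = 1")
    case True then show ?thesis using empty by simp
  next
    case False
    have "chi2 q t \<noteq> -1" using False ct by simp
    then have "chi2 q t = 1" using chi_pm[OF t0] by simp
    then obtain \<gamma> where gF: "\<gamma> \<in> Fq q" and g2: "\<gamma> ^ 2 = t" using t0 unfolding chi2_def
      by (auto split: if_splits)
    have m1: "chi2 q (-1::'a) = -1" using chi_m1 q3 by simp
    have g0: "\<gamma> \<noteq> 0" using g2 t0 by auto
    have "card {X. fmap q a X = \<alpha> * \<beta>} = 2"
      using sq_count[OF aF a0 a1 am1 alF al0 gF g2[unfolded t_def]] m1 pm[OF g0] by auto
    then show ?thesis using False by simp
  qed
  have P3: "card {X. fmap q a X = \<alpha> * \<beta>} = (if chi2 q (2 * \<gamma> * \<alpha> * a) = 1 then 4 else 0)"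
    if q1: "q mod 4 = 1" and gF: "\<gamma> \<in> Fq q" and g2: "\<gamma> ^ 2 = - ((a - 1) * b / (a + 1))" for \<gamma>
  proof -
    have m1: "chi2 q (-1::'a) = 1" using chi_m1 q1 by simp
    show ?thesis using sq_count[OF aF a0 a1 am1 alF al0 gF g2] m1 by simp
  qed
  show ?thesis using P2 P3 empty by blast
qed

end

theorem theorem21:
  fixes p k q :: nat and a b \<beta> \<alpha> :: "'a::{field,finite}"
  assumes "prime p" and "odd p" and "k \<ge> 1" and "q = p ^ k"
    and "card (UNIV :: 'a set) = q ^ 2"
    and "a \<in> Fq q" and "a \<noteq> 0" and "a \<noteq> 1" and "a \<noteq> -1"
    and "b \<in> Fq q" and "chi2 q b = -1"
    and "\<beta> ^ 2 = b"
    and "\<alpha> \<in> Fq q" and "\<alpha> \<noteq> 0"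
  shows
    "card {X. fmap q a X = \<alpha>} =
       (if chi2 q (\<alpha> * (a - 1)) = 1 \<and> chi2 q (\<alpha> * (a + 1)) = -1 then 0
        else if chi2 q (\<alpha> * (a - 1)) = -1 \<and> chi2 q (\<alpha> * (a + 1)) = 1 then 4
        else 2)
     \<and> (q mod 4 = 3 \<longrightarrow>
          card {X. fmap q a X = \<alpha> * \<beta>} = (if chi2 q (1 - a ^ 2) = 1 then 0 else 2))
     \<and> (q mod 4 = 1 \<longrightarrow>
          (chi2 q (1 - a ^ 2) = 1 \<longrightarrow> card {X. fmap q a X = \<alpha> * \<beta>} = 0)
        \<and> (chi2 q (1 - a ^ 2) = -1 \<longrightarrow>
             (\<forall>\<gamma>\<in>Fq q. \<gamma> ^ 2 = - ((a - 1) * b / (a + 1)) \<longrightarrow>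
                card {X. fmap q a X = \<alpha> * \<beta>} =
                  (if chi2 q (2 * \<gamma> * \<alpha> * a) = 1 then 4 else 0))))"
proof -
  interpret FF p k q b \<beta>
    by unfold_locales (use assms in auto)
  show ?thesis
    using part1[OF assms(6-9) assms(13,14)] part23[OF assms(6-9) assms(13,14)] by blast
qed

end
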